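(* Let $\pi\in\mathfrak{S}_n$ avoid $231$, and let $(a,c,b)$ and $(d,f,e)$ be $3$-cycles in the disjoint cycle decomposition of $\pi$ with $a<b<c$, $d<e<f$ and $a<d$. Then one of the following holds: (1) $c<d$ (so that each of $a,b,c$ is less than each of $d,e,f$); (2) $c>f$ and $d<b<e$; (3) $c>f$ and $e<b<f$.
   Context: A permutation avoids $231$ if there are no indices $i<j<k$ with $\pi_k<\pi_i<\pi_j$. The cycle $(a,c,b)$ means $a\mapsto c\mapsto b\mapsto a$. *)

theory Defs
  imports "HOL-Combinatorics.Permutations"
begin

definition avoids_231 :: "nat \<Rightarrow> (nat \<Rightarrow> nat) \<Rightarrow> bool" where
  "avoids_231 n \<pi> \<longleftrightarrow>
     \<not> (\<exists>i j k. 1 \<le> i \<and> i < j \<and> j < k \<and> k \<le> n \<and> \<pi> k < \<pi> i \<and> \<pi> i < \<pi> j)"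

definition has_3cycle :: "(nat \<Rightarrow> nat) \<Rightarrow> nat \<Rightarrow> nat \<Rightarrow> nat \<Rightarrow> bool" where
  "has_3cycle \<pi> x y z \<longleftrightarrow> distinct [x, y, z] \<and> \<pi> x = y \<and> \<pi> y = z \<and> \<pi> z = x"

end

theory Submission
  imports Defs
begin

theorem lemma3p3:
  fixes n :: nat and \<pi> :: "nat \<Rightarrow> nat" and a b c d e f :: nat
  assumes "\<pi> permutes {1..n}"
    and "avoids_231 n \<pi>"
    and "a \<in> {1..n}" and "b \<in> {1..n}" and "c \<in> {1..n}"
    and "d \<in> {1..n}" and "e \<in> {1..n}" and "f \<in> {1..n}"
    and "has_3cycle \<pi> a c b" and "has_3cycle \<pi> d f e"
    and "a < b" and "b < c" and "d < e" and "e < f" and "a < d"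
  shows "c < d \<or> (c > f \<and> d < b \<and> b < e) \<or> (c > f \<and> e < b \<and> b < f)"
proof -
  have p: "\<pi> a = c" "\<pi> c = b" "\<pi> b = a" "\<pi> d = f" "\<pi> f = e" "\<pi> e = d"
    using assms(9,10) unfolding has_3cycle_def by auto
  have nd: "b \<noteq> d" "b \<noteq> e" "b \<noteq> f" "c \<noteq> d" "c \<noteq> e" "c \<noteq> f"
    using p assms(11-15) by (metis less_irrefl less_trans)+
  have av: "\<not> (1 \<le> i \<and> i < j \<and> j < k \<and> k \<le> n \<and> \<pi> k < \<pi> i \<and> \<pi> i < \<pi> j)" for i j k
    using assms(2) unfolding avoids_231_def by blast
  note t1 = av[of a d e] and t2 = av[of e f c] and t3 = av[of e f b]
  show ?thesis using t1 t2 t3 p nd assms(3-8,11-15) by auto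
qed

end
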